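(* Let $m$ be a string transduction. Then $m$ is realized by a finite visit 2gsm if and only if $m$ is realized by a 2gsm and $m$ is finitary.
   Context: A 2gsm is $M=(Q,\Sigma_1,\Sigma_2,\delta,q_{in},q_f)$ with finite state set $Q$ and instructions $(p,\sigma,q_1,\alpha_1,\epsilon_1,q_0,\alpha_0,\epsilon_0)$, $p\neq q_f$, $\sigma\in\Sigma_1\cup\{\vdash,\dashv\}$, $\alpha_i\in\Sigma_2^*$, $\epsilon_i\in\{-1,0,+1\}$. On input $w$ the read-only tape is $\vdash w\dashv$ (positions $0..|w|+1$); start in $q_{in}$ at position 0; in state $p$ any instruction starting with $p$ may be executed: if the scanned symbol is $\sigma$, go to $q_1$, append $\alpha_1$ to the one-way output tape and move by $\epsilon_1$, else do the same with $(q_0,\alpha_0,\epsilon_0)$; the head may not leave the tape. $M$ realizes the relation of all $(w,z)$ such that some computation reaches $q_f$ having written $z$ (a successful computation for $(w,z)$). A computation is $k$-visiting if each tape position is visited at most $k$ times. $M$ is finite visit if there is a constant $k$ such that for every pair $(w,z)$ in the relation realized by $M$ there is a $k$-visiting successful computation for $(w,z)$. A relation $m$ is finitary if $\{z\mid(w,z)\in m\}$ is finite for every $w$ in the domain of $m$. *)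

theory Defs
  imports Main
begin

datatype 'a tsym = LEnd | REnd | Sym 'a

text \<open>An instruction (p, sigma, q1, alpha1, eps1, q0, alpha0, eps0).\<close>
type_synonym ('a,'b) instr = "nat \<times> 'a tsym \<times> nat \<times> 'b list \<times> int \<times> nat \<times> 'b list \<times> int"

record ('a,'b) gsm2 =
  states :: "nat set"
  inalph :: "'a set"
  outalph :: "'b set"
  delta :: "('a,'b) instr set"
  qin :: nat
  qf :: nat

definition is_2gsm :: "('a,'b) gsm2 \<Rightarrow> bool" where
  "is_2gsm M \<longleftrightarrow> finite (states M) \<and> finite (inalph M) \<and> finite (outalph M)
     \<and> finite (delta M) \<and> qin M \<in> states M \<and> qf M \<in> states M
     \<and> (\<forall>(p,\<sigma>,q1,a1,e1,q0,a0,e0) \<in> delta M.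
          p \<in> states M \<and> p \<noteq> qf M \<and> \<sigma> \<in> Sym ` inalph M \<union> {LEnd, REnd}
          \<and> q1 \<in> states M \<and> a1 \<in> lists (outalph M) \<and> e1 \<in> {-1,0,1}
          \<and> q0 \<in> states M \<and> a0 \<in> lists (outalph M) \<and> e0 \<in> {-1,0,1})"

text \<open>The read-only tape contents on input w: positions 0 .. length w + 1.\<close>
definition tape :: "'a list \<Rightarrow> 'a tsym list" where
  "tape w = [LEnd] @ map Sym w @ [REnd]"

text \<open>Configurations: (state, head position, output written so far).\<close>
type_synonym 'b config = "nat \<times> nat \<times> 'b list"

definition step :: "('a,'b) gsm2 \<Rightarrow> 'a list \<Rightarrow> 'b config \<Rightarrow> 'b config \<Rightarrow> bool" where
  "step M w c c' \<longleftrightarrow> (case c of (p,i,u) \<Rightarrow> case c' of (p',i',u') \<Rightarrow>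
     i' \<le> length w + 1 \<and>
     (\<exists>(p0,\<sigma>,q1,a1,e1,q0,a0,e0) \<in> delta M. p0 = p \<and>
        (if tape w ! i = \<sigma>
         then p' = q1 \<and> u' = u @ a1 \<and> int i' = int i + e1
         else p' = q0 \<and> u' = u @ a0 \<and> int i' = int i + e0)))"

definition computation :: "('a,'b) gsm2 \<Rightarrow> 'a list \<Rightarrow> 'b config list \<Rightarrow> bool" where
  "computation M w cs \<longleftrightarrow> cs \<noteq> [] \<and> hd cs = (qin M, 0, [])
     \<and> (\<forall>i. Suc i < length cs \<longrightarrow> step M w (cs ! i) (cs ! Suc i))"

definition successful :: "('a,'b) gsm2 \<Rightarrow> 'a list \<Rightarrow> 'b list \<Rightarrow> 'b config list \<Rightarrow> bool" where
  "successful M w z cs \<longleftrightarrow> computation M w cs \<and> fst (last cs) = qf M \<and> snd (snd (last cs)) = z"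

definition realized :: "('a,'b) gsm2 \<Rightarrow> ('a list \<times> 'b list) set" where
  "realized M = {(w,z). w \<in> lists (inalph M) \<and> (\<exists>cs. successful M w z cs)}"

definition visits :: "'b config list \<Rightarrow> nat \<Rightarrow> nat" where
  "visits cs j = length (filter (\<lambda>c. fst (snd c) = j) cs)"

definition k_visiting :: "nat \<Rightarrow> 'b config list \<Rightarrow> bool" where
  "k_visiting k cs \<longleftrightarrow> (\<forall>j. visits cs j \<le> k)"

definition finite_visit :: "('a,'b) gsm2 \<Rightarrow> bool" where
  "finite_visit M \<longleftrightarrow> (\<exists>k. \<forall>(w,z) \<in> realized M. \<exists>cs. successful M w z cs \<and> k_visiting k cs)"

definition finitary :: "('a \<times> 'b) set \<Rightarrow> bool" where
  "finitary m \<longleftrightarrow> (\<forall>w \<in> Domain m. finite {z. (w,z) \<in> m})"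

end

theory Submission
  imports Defs
begin

lemma step_D:
  assumes "step M w (p,x,u) (p',x',u')"
  shows "\<exists>a. u' = u @ a \<and> x' \<le> length w + 1 \<and> (\<forall>v. step M w (p,x,v) (p',x',v@a))
     \<and> (\<exists>p0 \<sigma> q1 a1 e1 q0 a0 e0. (p0,\<sigma>,q1,a1,e1,q0,a0,e0)\<in>delta M \<and> p0 = p \<and> (p' = q1 \<and> a = a1 \<or> p' = q0 \<and> a = a0))"
proof -
  from assms obtain p0 \<sigma> q1 a1 e1 q0 a0 e0 where t: "(p0,\<sigma>,q1,a1,e1,q0,a0,e0) \<in> delta M" "p0 = p"
    and c: "if tape w ! x = \<sigma> then p' = q1 \<and> u' = u @ a1 \<and> int x' = int x + e1 else p' = q0 \<and> u' = u @ a0 \<and> int x' = int x + e0"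
    and b: "x' \<le> length w + 1"
    unfolding step_def by auto
  show ?thesis
  proof (cases "tape w ! x = \<sigma>")
    case True
    have "step M w (p,x,v) (p',x',v@a1)" for v
      unfolding step_def using t c b True by (auto intro!: bexI[OF _ t(1)])
    then show ?thesis using t c b True by (intro exI[of _ a1]) (auto; blast)
  next
    case False
    have "step M w (p,x,v) (p',x',v@a0)" for v
      unfolding step_def using t c b False by (auto intro!: bexI[OF _ t(1)])
    then show ?thesis using t c b False by (intro exI[of _ a0]) (auto; blast)
  qed
qed

lemma step_D':
  assumes "step M w c c'"
  shows "\<exists>a. snd (snd c') = snd (snd c) @ a \<and> fst (snd c') \<le> length w + 1
     \<and> (\<forall>v. step M w (fst c, fst (snd c), v) (fst c', fst (snd c'), v@a))
     \<and> (\<exists>p0 \<sigma> q1 a1 e1 q0 a0 e0. (p0,\<sigma>,q1,a1,e1,q0,a0,e0)\<in>delta M \<and> p0 = fst c \<and> (fst c' = q1 \<and> a = a1 \<or> fst c' = q0 \<and> a = a0))"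
  using step_D[of M w "fst c" "fst (snd c)" "snd (snd c)" "fst c'" "fst (snd c')" "snd (snd c')"] assms
  by auto

lemma comp_states:
  assumes "is_2gsm M" "computation M w cs" "k < length cs"
  shows "fst (cs!k) \<in> states M \<and> fst (snd (cs!k)) \<le> length w + 1"
  using assms(3)
proof (induction k)
  case 0
  then show ?case using assms(1,2) by (cases cs) (auto simp: computation_def is_2gsm_def)
next
  case (Suc k)
  then have "step M w (cs!k) (cs!Suc k)" using assms(2) by (auto simp: computation_def)
  from step_D'[OF this] obtain a p0 \<sigma> q1 a1 e1 q0 a0 e0 where
    "fst (snd (cs!Suc k)) \<le> length w + 1" "(p0,\<sigma>,q1,a1,e1,q0,a0,e0)\<in>delta M"
    "fst (cs!Suc k) = q1 \<or> fst (cs!Suc k) = q0" by blast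
  then show ?case using assms(1) unfolding is_2gsm_def by fastforce
qed

lemma comp_states_set:
  assumes "is_2gsm M" "computation M w cs" "c \<in> set cs"
  shows "fst c \<in> states M \<and> fst (snd c) \<le> length w + 1"
proof -
  obtain i where "i < length cs" "c = cs!i" using assms(3) by (auto simp: in_set_conv_nth)
  then show ?thesis using comp_states[OF assms(1,2)] by blast
qed

lemma comp_prefix:
  assumes "computation M w cs" "k \<le> k'" "k' < length cs"
  shows "\<exists>t. snd (snd (cs!k')) = snd (snd (cs!k)) @ t"
  using assms(2,3)
proof (induction k' rule: dec_induct)
  case base
  then show ?case by auto
next
  case (step n)
  then have "step M w (cs!n) (cs!Suc n)" using assms(1) by (auto simp: computation_def)
  from step_D'[OF this] step show ?case by fastforce
qed

definition bndA :: "('a,'b) gsm2 \<Rightarrow> nat" where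
  "bndA M = (\<Sum>(p,\<sigma>,q1,a1,e1,q0,a0,e0)\<in>delta M. length a1 + length a0)"

lemma comp_out_len:
  assumes "is_2gsm M" "computation M w cs" "k < length cs"
  shows "length (snd (snd (cs!k))) \<le> k * bndA M"
  using assms(3)
proof (induction k)
  case 0
  then show ?case using assms(1,2) by (cases cs) (auto simp: computation_def)
next
  case (Suc k)
  then have "step M w (cs!k) (cs!Suc k)" using assms(2) by (auto simp: computation_def)
  from step_D'[OF this] obtain a p0 \<sigma> q1 a1 e1 q0 a0 e0 where
    o: "snd (snd (cs!Suc k)) = snd (snd (cs!k)) @ a" and t: "(p0,\<sigma>,q1,a1,e1,q0,a0,e0)\<in>delta M"
    "a = a1 \<or> a = a0" by blast
  have fin: "finite (delta M)" using assms(1) by (simp add: is_2gsm_def)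
  have "(\<lambda>(p,\<sigma>,q1,a1,e1,q0,a0,e0). length a1 + length a0) (p0,\<sigma>,q1,a1,e1,q0,a0,e0) \<le> bndA M"
    unfolding bndA_def by (rule member_le_sum[OF t(1) _ fin]) auto
  then have "length a \<le> bndA M" using t(2) by auto
  then show ?case using Suc o by auto
qed


definition ins :: "'b list \<Rightarrow> nat \<Rightarrow> 'b config \<Rightarrow> 'b config" where
  "ins y l c = (fst c, fst (snd c), take l (snd (snd c)) @ y @ drop l (snd (snd c)))"

lemma step_ins:
  assumes "step M w c c'" "l \<le> length (snd (snd c))"
  shows "step M w (ins y l c) (ins y l c')"
proof -
  from step_D'[OF assms(1)] obtain a where a: "snd (snd c') = snd (snd c) @ a"
    "\<And>v. step M w (fst c, fst (snd c), v) (fst c', fst (snd c'), v@a)" by blast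
  have "take l (snd (snd c')) @ y @ drop l (snd (snd c')) = (take l (snd (snd c)) @ y @ drop l (snd (snd c))) @ a"
    using a(1) assms(2) by simp
  then show ?thesis using a(2) unfolding ins_def by metis
qed

lemma pump:
  assumes comp: "computation M w cs" and ij: "i < j" "j < length cs"
    and same: "fst (cs!i) = fst (cs!j)" "fst (snd (cs!i)) = fst (snd (cs!j))"
    and y: "snd (snd (cs!j)) = snd (snd (cs!i)) @ y"
  shows "\<exists>cs'. computation M w cs' \<and> j < length cs' \<and> (\<forall>k\<le>j. cs'!k = cs!k)
     \<and> fst (last cs') = fst (last cs) \<and> length (snd (snd (last cs'))) = length (snd (snd (last cs))) + length y"
proof -
  define l where "l = length (snd (snd (cs!i)))"
  define cs' where "cs' = take (Suc j) cs @ map (ins y l) (drop (Suc i) cs)"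
  have len: "length cs' = Suc j + (length cs - Suc i)" using ij by (simp add: cs'_def)
  have pre: "k \<le> j \<Longrightarrow> cs'!k = cs!k" for k using ij by (simp add: cs'_def nth_append)
  have post: "k < length cs - Suc i \<Longrightarrow> cs'!(Suc j + k) = ins y l (cs!(Suc i + k))" for k
    using ij by (simp add: cs'_def nth_append)
  have lge: "i \<le> k \<Longrightarrow> k < length cs \<Longrightarrow> l \<le> length (snd (snd (cs!k)))" for k
    using comp_prefix[OF comp, of i k] l_def by auto
  have st: "Suc k < length cs \<Longrightarrow> step M w (cs!k) (cs!Suc k)" for k
    using comp by (simp add: computation_def)
  have steps: "step M w (cs'!n) (cs'!Suc n)" if n: "Suc n < length cs'" for n
  proof -
    consider "Suc n \<le> j" | "n = j" | "j < n" by linarith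
    then show ?thesis
    proof cases
      case 1 then show ?thesis using pre st ij by simp
    next
      case 2
      have "step M w (cs!i) (cs!Suc i)" using st ij by simp
      from step_D'[OF this] obtain a where a: "snd (snd (cs!Suc i)) = snd (snd (cs!i)) @ a"
        "\<And>v. step M w (fst (cs!i), fst (snd (cs!i)), v) (fst (cs!Suc i), fst (snd (cs!Suc i)), v@a)" by blast
      have e1: "cs'!n = (fst (cs!i), fst (snd (cs!i)), snd (snd (cs!i)) @ y)"
        using pre[of j] 2 same y by (cases "cs!j") auto
      have e2: "cs'!Suc n = (fst (cs!Suc i), fst (snd (cs!Suc i)), (snd (snd (cs!i)) @ y) @ a)"
        using post[of 0] 2 n len a(1) by (simp add: ins_def l_def)
      show ?thesis unfolding e1 e2 by (rule a(2))
    next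
      case 3
      define k where "k = n - Suc j"
      have "cs'!n = ins y l (cs!(Suc i + k))" "cs'!Suc n = ins y l (cs!Suc (Suc i + k))"
        using post[of k] post[of "Suc k"] 3 n len by (auto simp: k_def)
      moreover have "step M w (cs!(Suc i + k)) (cs!Suc (Suc i + k))" using st 3 n len k_def by simp
      moreover have "l \<le> length (snd (snd (cs!(Suc i + k))))" using lge 3 n len k_def by simp
      ultimately show ?thesis using step_ins by metis
    qed
  qed
  have comp': "computation M w cs'"
  proof -
    have ne: "cs' \<noteq> []" using len by auto
    then have "hd cs' = cs'!0" by (simp add: hd_conv_nth)
    then show ?thesis using comp steps pre[of 0] ne unfolding computation_def by (auto simp: hd_conv_nth)
  qed
  have "last cs' = ins y l (last cs)"
    using ij by (simp add: cs'_def last_map)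
  moreover have "l \<le> length (snd (snd (last cs)))" proof -
    have "cs \<noteq> []" using ij by auto
    then show ?thesis using lge[of "length cs - 1"] ij by (simp add: last_conv_nth)
  qed
  ultimately show ?thesis using comp' len pre by (intro exI[of _ cs']) (auto simp: ins_def)
qed


lemma pump_iter:
  assumes comp: "computation M w cs" and ij: "i < j" "j < length cs"
    and same: "fst (cs!i) = fst (cs!j)" "fst (snd (cs!i)) = fst (snd (cs!j))"
    and y: "snd (snd (cs!j)) = snd (snd (cs!i)) @ y"
  shows "\<exists>cs'. computation M w cs' \<and> j < length cs' \<and> (\<forall>k\<le>j. cs'!k = cs!k)
     \<and> fst (last cs') = fst (last cs) \<and> length (snd (snd (last cs'))) = length (snd (snd (last cs))) + n * length y"
proof (induction n)
  case 0
  then show ?case using comp ij by auto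
next
  case (Suc n)
  then obtain cs' where c: "computation M w cs'" "j < length cs'" "\<forall>k\<le>j. cs'!k = cs!k"
     "fst (last cs') = fst (last cs)" "length (snd (snd (last cs'))) = length (snd (snd (last cs))) + n * length y"
    by blast
  have "cs'!i = cs!i" "cs'!j = cs!j" using c(3) ij by auto
  then obtain cs'' where "computation M w cs''" "j < length cs''" "\<forall>k\<le>j. cs''!k = cs'!k"
     "fst (last cs'') = fst (last cs')" "length (snd (snd (last cs''))) = length (snd (snd (last cs'))) + length y"
    using pump[OF c(1) ij(1) c(2)] same y by metis
  then show ?case using c by (intro exI[of _ cs'']) auto
qed

lemma remove_loop:
  assumes comp: "computation M w cs" and ij: "i < j" "j < length cs" and eq: "cs!i = cs!j"
  shows "computation M w (take i cs @ drop j cs) \<and> last (take i cs @ drop j cs) = last cs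
     \<and> length (take i cs @ drop j cs) < length cs"
proof -
  define cs' where "cs' = take i cs @ drop j cs"
  have len: "length cs' = i + (length cs - j)" using ij by (simp add: cs'_def)
  have nth: "n < length cs' \<Longrightarrow> cs'!n = cs!(if n < i then n else n - i + j)" for n
    using ij len by (auto simp: cs'_def nth_append add.commute)
  have st: "Suc k < length cs \<Longrightarrow> step M w (cs!k) (cs!Suc k)" for k
    using comp by (simp add: computation_def)
  have steps: "step M w (cs'!n) (cs'!Suc n)" if n: "Suc n < length cs'" for n
  proof -
    consider "Suc n < i" | "Suc n = i" | "i \<le> n" by linarith
    then show ?thesis
    proof cases
      case 1 then show ?thesis using nth[of n] nth[of "Suc n"] n st ij by simp
    next
      case 2 then show ?thesis using nth[of n] nth[of "Suc n"] n st[of n] ij eq by simp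
    next
      case 3
      then have "cs'!n = cs!(n - i + j)" "cs'!Suc n = cs!Suc (n - i + j)" using nth[of n] nth[of "Suc n"] n ij by (auto simp: Suc_diff_le)
      moreover have "Suc (n - i + j) < length cs" using n len 3 by linarith
      ultimately show ?thesis using st by simp
    qed
  qed
  have ne: "cs' \<noteq> []" using len ij by auto
  have h: "hd cs' = cs!0"
  proof (cases "i = 0")
    case True then show ?thesis using nth[of 0] ne eq by (simp add: hd_conv_nth)
  next
    case False then show ?thesis using nth[of 0] ne by (simp add: hd_conv_nth)
  qed
  have "hd cs = cs!0" using ij by (intro hd_conv_nth) auto
  then have comp': "computation M w cs'" using comp steps ne h unfolding computation_def by auto
  have "last cs' = last cs" using ij by (simp add: cs'_def)
  then show ?thesis using comp' len ij by (simp add: cs'_def)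
qed

lemma len_le_visits:
  assumes "\<forall>c\<in>set cs. fst (snd c) \<le> N"
  shows "length cs \<le> (\<Sum>x\<le>N. visits cs x)"
  using assms
proof (induction cs)
  case Nil then show ?case by simp
next
  case (Cons c cs)
  have "(\<Sum>x\<le>N. visits (c#cs) x) = (\<Sum>x\<le>N. (if fst (snd c) = x then 1 else 0) + visits cs x)"
    by (intro sum.cong) (auto simp: visits_def)
  also have "\<dots> = 1 + (\<Sum>x\<le>N. visits cs x)" using Cons.prems by (simp add: sum.distrib)
  finally show ?case using Cons by simp
qed


lemma fv_finitary:
  assumes M: "is_2gsm M" and fv: "finite_visit M" and r: "realized M = m"
    and sub: "m \<subseteq> lists \<Sigma>1 \<times> lists \<Sigma>2" and f2: "finite \<Sigma>2"
  shows "finitary m"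
  unfolding finitary_def
proof
  fix w assume "w \<in> Domain m"
  from fv obtain k where k: "\<forall>(w,z) \<in> realized M. \<exists>cs. successful M w z cs \<and> k_visiting k cs"
    unfolding finite_visit_def by blast
  have "{z. (w,z) \<in> m} \<subseteq> {z. set z \<subseteq> \<Sigma>2 \<and> length z \<le> ((length w + 2) * k) * bndA M}"
  proof safe
    fix z x assume wz: "(w,z) \<in> m" and "x \<in> set z"
    then show "x \<in> \<Sigma>2" using sub by auto
  next
    fix z assume wz: "(w,z) \<in> m"
    then obtain cs where cs: "successful M w z cs" "k_visiting k cs" using k r by blast
    have comp: "computation M w cs" using cs by (simp add: successful_def)
    have ne: "cs \<noteq> []" using comp by (simp add: computation_def)
    have "\<forall>c\<in>set cs. fst (snd c) \<le> length w + 1"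
      using comp_states_set[OF M comp] by auto
    then have "length cs \<le> (\<Sum>x\<le>length w + 1. visits cs x)" by (rule len_le_visits)
    also have "\<dots> \<le> (\<Sum>x\<le>length w + 1. k)" using cs(2) by (intro sum_mono) (simp add: k_visiting_def)
    finally have lc: "length cs \<le> (length w + 2) * k" by simp
    have "z = snd (snd (cs ! (length cs - 1)))" using cs ne by (simp add: successful_def last_conv_nth)
    then have "length z \<le> (length cs - 1) * bndA M" using comp_out_len[OF M comp, of "length cs - 1"] ne by simp
    also have "\<dots> \<le> ((length w + 2) * k) * bndA M" using lc by (intro mult_le_mono1) linarith
    finally show "length z \<le> ((length w + 2) * k) * bndA M" .
  qed
  then show "finite {z. (w,z) \<in> m}" by (rule finite_subset) (rule finite_lists_length_le[OF f2])
qed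

lemma finitary_fv:
  assumes M: "is_2gsm M" and r: "realized M = m" and fin: "finitary m"
  shows "finite_visit M"
  unfolding finite_visit_def
proof (intro exI[of _ "card (states M)"] ballI, clarify)
  fix w z assume wz: "(w,z) \<in> realized M"
  then have "\<exists>cs. successful M w z cs" by (simp add: realized_def)
  then obtain cs where cs: "successful M w z cs" and minl: "\<And>cs'. successful M w z cs' \<Longrightarrow> length cs \<le> length cs'"
    using ex_has_least_nat[of "successful M w z" _ length] by blast
  have comp: "computation M w cs" using cs by (simp add: successful_def)
  have wl: "w \<in> lists (inalph M)" using wz by (simp add: realized_def)
  let ?pr = "\<lambda>c::'b config. (fst c, fst (snd c))"
  have noloop: False if ij: "i < j" "j < length cs" and eq: "?pr (cs!i) = ?pr (cs!j)" for i j
  proof -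
    obtain y where y: "snd (snd (cs!j)) = snd (snd (cs!i)) @ y" using comp_prefix[OF comp, of i j] ij by auto
    show False
    proof (cases "y = []")
      case True
      then have "cs!i = cs!j" using eq y by (cases "cs!i", cases "cs!j") auto
      from remove_loop[OF comp ij this] have "successful M w z (take i cs @ drop j cs)"
        "length (take i cs @ drop j cs) < length cs"
        using cs by (auto simp: successful_def)
      then show False using minl by fastforce
    next
      case False
      have "\<forall>n. \<exists>z'. (w,z') \<in> m \<and> length z' = length z + n * length y"
      proof
        fix n
        obtain cs' where "computation M w cs'" "fst (last cs') = fst (last cs)"
          "length (snd (snd (last cs'))) = length (snd (snd (last cs))) + n * length y"
          using pump_iter[OF comp ij, of y n] eq y by auto
        then have "successful M w (snd (snd (last cs'))) cs'" "length (snd (snd (last cs'))) = length z + n * length y"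
          using cs by (auto simp: successful_def)
        then show "\<exists>z'. (w,z') \<in> m \<and> length z' = length z + n * length y"
          using wl r by (auto simp: realized_def)
      qed
      moreover have "w \<in> Domain m" using wz r by auto
      then have "finite {z. (w,z) \<in> m}" using fin by (simp add: finitary_def)
      then have "finite (length ` {z. (w,z) \<in> m})" by simp
      then obtain B where B: "\<forall>l \<in> length ` {z. (w,z) \<in> m}. l \<le> B" using finite_nat_set_iff_bounded_le by blast
      ultimately obtain z' where "(w,z') \<in> m" "length z' = length z + Suc B * length y" by blast
      moreover have "Suc B \<le> Suc B * length y"
      proof -
        have "1 \<le> length y" using False by (simp add: Suc_le_eq)
        then show ?thesis using mult_le_mono2[of 1 "length y" "Suc B"] by simp
      qed
      ultimately show False using B by force
    qed
  qed
  have dist: "distinct (map ?pr cs)"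
  proof (unfold distinct_conv_nth, intro allI impI)
    fix i j assume "i < length (map ?pr cs)" "j < length (map ?pr cs)" "i \<noteq> j"
    then show "map ?pr cs ! i \<noteq> map ?pr cs ! j"
      using noloop[of i j] noloop[of j i] by (cases "i < j") auto
  qed
  have "visits cs x \<le> card (states M)" for x
  proof -
    let ?f = "filter (\<lambda>c. fst (snd c) = x) cs"
    have d: "distinct (map ?pr ?f)" using dist by (rule distinct_map_filter)
    have "visits cs x = length (map ?pr ?f)" by (simp add: visits_def)
    also have "\<dots> = card (set (map ?pr ?f))" by (rule distinct_card[OF d, symmetric])
    also have "\<dots> \<le> card (states M \<times> {x})"
    proof (rule card_mono)
      show "finite (states M \<times> {x})" using M by (simp add: is_2gsm_def)
      show "set (map ?pr ?f) \<subseteq> states M \<times> {x}"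
        using comp_states_set[OF M comp] by auto
    qed
    also have "\<dots> = card (states M)" by (simp add: card_cartesian_product)
    finally show ?thesis .
  qed
  then show "\<exists>cs. successful M w z cs \<and> k_visiting (card (states M)) cs"
    using cs by (auto simp: k_visiting_def)
qed

theorem lemma6p1:
  fixes \<Sigma>1 :: "'a set" and \<Sigma>2 :: "'b set" and m :: "('a list \<times> 'b list) set"
  assumes "finite \<Sigma>1" and "finite \<Sigma>2" and "m \<subseteq> lists \<Sigma>1 \<times> lists \<Sigma>2"
  shows "(\<exists>M :: ('a,'b) gsm2. is_2gsm M \<and> inalph M = \<Sigma>1 \<and> outalph M = \<Sigma>2
              \<and> finite_visit M \<and> realized M = m)
     \<longleftrightarrow> (\<exists>M :: ('a,'b) gsm2. is_2gsm M \<and> inalph M = \<Sigma>1 \<and> outalph M = \<Sigma>2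
              \<and> realized M = m) \<and> finitary m"
  using fv_finitary[OF _ _ _ assms(3,2)] finitary_fv by blast

end
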